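(* Let $p \geq 2$ be a large prime and let $\tau$ be a primitive root modulo $p$. Then for any arbitrarily small number $\varepsilon \in (0, 1/16)$, \[ \max_{\gcd(s,p-1)=1} \left| \sum_{\substack{1 \leq n \leq p-1\\ \gcd(n,p-1)=1}} e^{2\pi i s \tau^n / p} \right| \ll p^{1-\varepsilon}. \] *)

theory Defs
  imports "HOL-Analysis.Analysis" "HOL-Number_Theory.Number_Theory"
begin

end

theory Submission
  imports Defs
begin

definition ee :: "nat \<Rightarrow> int \<Rightarrow> complex" where
  "ee p x = exp (2 * of_real pi * \<i> * of_int x / of_nat p)"

lemma ee_add: "ee p (x + y) = ee p x * ee p y"
  unfolding ee_def by (simp add: exp_add[symmetric] distrib_left add_divide_distrib)

lemma ee_period: assumes "p > 0" shows "ee p (x + int p * k) = ee p x"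
proof -
  have "ee p (int p * k) = exp ((2 * of_int k * pi) * \<i>)"
    unfolding ee_def using assms by (simp add: field_simps)
  also have "\<dots> = 1" by (rule exp_integer_2pi) simp
  finally show ?thesis by (simp add: ee_add)
qed

lemma ee_mod: assumes "p > 0" shows "ee p (x mod int p) = ee p x"
proof -
  have "x = x mod int p + int p * (x div int p)" by simp
  then show ?thesis using ee_period[OF assms, of "x mod int p" "x div int p"] by metis
qed

lemma ee_cong: assumes "p > 0" "[x = y] (mod int p)" shows "ee p x = ee p y"
  using assms ee_mod unfolding cong_def by metis

lemma norm_ee: "norm (ee p x) = 1"
  unfolding ee_def by (simp add: norm_exp_eq_Re)

lemma ee_cnj: "cnj (ee p x) = ee p (- x)"
proof -
  have "cnj (2 * of_real pi * \<i> * of_int x / of_nat p) = -(2 * of_real pi * \<i> * of_int x / of_nat p)" by simp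
  then show ?thesis unfolding ee_def by (simp add: exp_cnj)
qed

lemma ee_eq_1: assumes "p > 0" shows "ee p t = 1 \<longleftrightarrow> int p dvd t"
proof
  assume "int p dvd t" then obtain k where "t = int p * k" by blast
  then show "ee p t = 1" using ee_period[OF assms, of 0 k] by (simp add: ee_def)
next
  assume "ee p t = 1"
  then obtain n :: int where n: "2 * pi * of_int t / real p = of_int (2 * n) * pi"
    unfolding ee_def exp_eq_1 by auto
  then have "of_int t = real p * of_int n" using assms by (simp add: field_simps)
  then have "t = int p * n" by (metis of_int_eq_iff of_int_mult of_int_of_nat_eq)
  then show "int p dvd t" by simp
qed

lemma ee_mult_nat: "ee p (int x * t) = ee p t ^ x"
  unfolding ee_def by (simp add: exp_of_nat_mult[symmetric] mult_ac)

lemma orth: assumes "p > 0"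
  shows "(\<Sum>x<p. ee p (int x * t)) = (if int p dvd t then of_nat p else 0)"
proof (cases "int p dvd t")
  case True
  then have "ee p t = 1" using ee_eq_1[OF assms] by simp
  then have "\<And>x. ee p (int x * t) = 1" by (simp add: ee_mult_nat)
  then show ?thesis using True by simp
next
  case False
  then have ne: "ee p t \<noteq> 1" using ee_eq_1[OF assms] by simp
  have "ee p t ^ p = 1" using ee_mult_nat[of p p t, symmetric] ee_eq_1[OF assms] by simp
  then show ?thesis using False geometric_sum[OF ne, of p] by (simp add: ee_mult_nat)
qed

lemma sum_shift_periodic:
  fixes g :: "nat \<Rightarrow> 'a::comm_monoid_add"
  assumes "k > 0" "\<And>j. g (j mod k) = g j"
  shows "(\<Sum>j<k. g (i + j)) = (\<Sum>j<k. g j)"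
proof -
  define h where "h = (\<lambda>j. (i + j) mod k)"
  have inj: "inj_on h {..<k}"
    unfolding h_def inj_on_def by (metis cong_add_lcancel_nat cong_def lessThan_iff mod_less)
  have im: "h ` {..<k} = {..<k}"
    by (rule endo_inj_surj) (use inj assms(1) in \<open>auto simp: h_def\<close>)
  have "(\<Sum>j<k. g (i + j)) = (\<Sum>j<k. g (h j))" by (simp add: h_def assms(2))
  also have "\<dots> = sum g (h ` {..<k})" by (simp add: sum.reindex[OF inj])
  also have "\<dots> = (\<Sum>j<k. g j)" by (simp add: im)
  finally show ?thesis .
qed

lemma subgroup_bound:
  assumes p: "prime p" and r: "residue_primroot p \<tau>" and d: "d dvd p - 1" and s: "coprime s p"
  shows "norm (\<Sum>j< (p-1) div d. ee p (int (s * \<tau>^(d*j)))) \<le> sqrt p"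
proof -
  define m where "m = p - 1"
  define k where "k = m div d"
  define S where "S = (\<lambda>a::nat. \<Sum>j<k. ee p (int (a * \<tau>^(d*j))))"
  have p0: "p > 0" "p > 1" using prime_gt_1_nat[OF p] by auto
  have m0: "m > 0" using p0 unfolding m_def by simp
  have cop: "coprime p \<tau>" and ordm: "ord p \<tau> = m"
    using r p unfolding residue_primroot_def m_def by (auto simp: totient_prime)
  have dm: "d dvd m" using d m_def by simp
  have d0: "d > 0" using dm m0 by (auto intro: Nat.gr0I)
  have dk: "d * k = m" using dm k_def by simp
  have k0: "k > 0" using dk m0 by (auto intro: Nat.gr0I)
  have powcong: "[\<tau>^a = \<tau>^b] (mod p) \<longleftrightarrow> [a = b] (mod m)" for a b
    using order_divides_expdiff[OF cop] ordm by simp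
  have eecong: "ee p (int x) = ee p (int y)" if "[x = y] (mod p)" for x y
    using ee_cong[OF p0(1)] that by (simp add: cong_int_iff)
  have per: "ee p (int (a * \<tau>^(d*(j mod k)))) = ee p (int (a * \<tau>^(d*j)))" for a j
  proof -
    have "d * j = d * (j mod k) + m * (j div k)"
      using dk by (metis add.commute div_mult_mod_eq distrib_left mult.assoc mult.commute)
    then have "[d*(j mod k) = d*j] (mod m)"
      by (metis cong_def mod_mult_self2)
    then have "[\<tau>^(d*(j mod k)) = \<tau>^(d*j)] (mod p)" using powcong by simp
    then have "[a * \<tau>^(d*(j mod k)) = a * \<tau>^(d*j)] (mod p)" by (rule cong_scalar_left)
    then show ?thesis by (rule eecong)
  qed
  have Sinv: "S (a * \<tau>^(d*i)) = S a" for a i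
  proof -
    have "S (a * \<tau>^(d*i)) = (\<Sum>j<k. ee p (int (a * \<tau>^(d*(i+j)))))"
      unfolding S_def by (simp add: distrib_left power_add mult.assoc)
    also have "\<dots> = S a" unfolding S_def
      by (rule sum_shift_periodic[OF k0, where g = "\<lambda>j. ee p (int (a * \<tau>^(d*j)))"]) (rule per)
    finally show ?thesis .
  qed
  have Smod: "S (x mod p) = S x" for x
    unfolding S_def by (intro sum.cong refl eecong) (simp add: cong_def mod_mult_left_eq)
  have distinct: "[\<tau>^(d*j) = \<tau>^(d*l)] (mod p) \<longleftrightarrow> j = l" if "j < k" "l < k" for j l
  proof -
    have "d*j < m" "d*l < m" using that dk d0 by (metis mult_less_cancel1)+
    then show ?thesis using powcong d0 by (auto simp: cong_def)
  qed
  have parseval: "(\<Sum>x<p. (norm (S x))^2) = real (p * k)"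
  proof -
    have "complex_of_real (\<Sum>x<p. (norm (S x))^2) = (\<Sum>x<p. S x * cnj (S x))"
      by (simp only: of_real_sum complex_norm_square)
    also have "\<dots> = (\<Sum>x<p. \<Sum>j<k. \<Sum>l<k. ee p (int x * (int (\<tau>^(d*l)) - int (\<tau>^(d*j)))))"
      unfolding S_def
      by (simp add: sum_distrib_left sum_distrib_right ee_cnj ee_add[symmetric] algebra_simps)
    also have "\<dots> = (\<Sum>j<k. \<Sum>l<k. \<Sum>x<p. ee p (int x * (int (\<tau>^(d*l)) - int (\<tau>^(d*j)))))"
      by (subst sum.swap) (simp add: sum.swap[of _ "{..<k}" "{..<p}"])
    also have "\<dots> = (\<Sum>j<k. \<Sum>l<k. if j = l then of_nat p else 0)"
    proof (intro sum.cong refl)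
      fix j l assume "j \<in> {..<k}" "l \<in> {..<k}"
      then have "int p dvd (int (\<tau>^(d*l)) - int (\<tau>^(d*j))) \<longleftrightarrow> j = l"
        using distinct[of l j] by (auto simp: cong_iff_dvd_diff cong_int_iff[symmetric])
      then show "(\<Sum>x<p. ee p (int x * (int (\<tau>^(d*l)) - int (\<tau>^(d*j))))) = (if j = l then of_nat p else 0)"
        by (simp add: orth[OF p0(1)])
    qed
    also have "\<dots> = of_nat (p * k)" by simp
    finally show ?thesis by (metis of_real_eq_iff of_real_of_nat_eq)
  qed
  define h where "h = (\<lambda>i. (s * \<tau>^(d*i)) mod p)"
  have injh: "inj_on h {..<k}"
  proof
    fix i l assume il: "i \<in> {..<k}" "l \<in> {..<k}" "h i = h l"
    then have "[s * \<tau>^(d*i) = s * \<tau>^(d*l)] (mod p)" by (simp add: h_def cong_def)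
    then have "[\<tau>^(d*i) = \<tau>^(d*l)] (mod p)"
      using s by (metis cong_mult_lcancel_nat coprime_commute)
    then show "i = l" using distinct il by auto
  qed
  have hsub: "h ` {..<k} \<subseteq> {..<p}" using p0 by (auto simp: h_def)
  have "real k * (norm (S s))^2 = (\<Sum>i<k. (norm (S (s * \<tau>^(d*i))))^2)"
    by (simp add: Sinv)
  also have "\<dots> = (\<Sum>i<k. (norm (S (h i)))^2)" by (simp add: h_def Smod)
  also have "\<dots> = (\<Sum>y\<in>h ` {..<k}. (norm (S y))^2)" by (simp add: sum.reindex[OF injh])
  also have "\<dots> \<le> (\<Sum>y<p. (norm (S y))^2)" by (rule sum_mono2[OF _ hsub]) auto
  also have "\<dots> = real k * real p" using parseval by simp
  finally have "(norm (S s))^2 \<le> real p" using k0 by simp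
  then have "norm (S s) \<le> sqrt p" using real_le_rsqrt by blast
  then show ?thesis unfolding S_def k_def m_def .
qed

definition FF :: "nat \<Rightarrow> nat \<Rightarrow> nat \<Rightarrow> nat \<Rightarrow> nat set \<Rightarrow> complex" where
  "FF p \<tau> s d Q = (\<Sum>n\<in>{n\<in>{1..p-1}. d dvd n \<and> (\<forall>q\<in>Q. \<not> q dvd n)}. ee p (int (s * \<tau>^n)))"

lemma FF_base:
  assumes p: "prime p" and r: "residue_primroot p \<tau>" and d: "d dvd p - 1" and s: "coprime s p"
  shows "norm (FF p \<tau> s d {}) \<le> sqrt p"
proof -
  define m where "m = p - 1"
  define k where "k = m div d"
  have p0: "p > 0" "p > 1" using prime_gt_1_nat[OF p] by auto
  have m0: "m > 0" using p0 unfolding m_def by simp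
  have cop: "coprime p \<tau>" and ordm: "ord p \<tau> = m"
    using r p unfolding residue_primroot_def m_def by (auto simp: totient_prime)
  have dm: "d dvd m" using d m_def by simp
  have d0: "d > 0" using dm m0 by (auto intro: Nat.gr0I)
  have dk: "d * k = m" using dm k_def by simp
  have k0: "k > 0" using dk m0 by (auto intro: Nat.gr0I)
  have powcong: "[\<tau>^a = \<tau>^b] (mod p) \<longleftrightarrow> [a = b] (mod m)" for a b
    using order_divides_expdiff[OF cop] ordm by simp
  have eecong: "ee p (int x) = ee p (int y)" if "[x = y] (mod p)" for x y
    using ee_cong[OF p0(1)] that by (simp add: cong_int_iff)
  define g where "g = (\<lambda>j. ee p (int (s * \<tau>^(d*j))))"
  have per: "g (j mod k) = g j" for j
  proof -
    have "d * j = d * (j mod k) + m * (j div k)"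
      using dk by (metis add.commute div_mult_mod_eq distrib_left mult.assoc mult.commute)
    then have "[d*(j mod k) = d*j] (mod m)"
      by (metis cong_def mod_mult_self2)
    then have "[\<tau>^(d*(j mod k)) = \<tau>^(d*j)] (mod p)" using powcong by simp
    then have "[s * \<tau>^(d*(j mod k)) = s * \<tau>^(d*j)] (mod p)" by (rule cong_scalar_left)
    then show ?thesis unfolding g_def by (rule eecong)
  qed
  have set_eq: "{n\<in>{1..p-1}. d dvd n \<and> (\<forall>q\<in>{}. \<not> q dvd n)} = (\<lambda>j. d*j) ` {1..k}"
  proof safe
    fix n assume n: "n \<in> {1..p-1}" "d dvd n"
    then obtain j where j: "n = d * j" by blast
    have "d*j \<le> d*k" using n j dk m_def by simp
    then have "j \<le> k" using d0 by simp
    moreover have "j \<noteq> 0" using n j by auto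
    ultimately have "j \<in> {1..k}" by simp
    then show "n \<in> (\<lambda>j. d*j) ` {1..k}" using j by blast
  next
    fix j assume "j \<in> {1..k}"
    then have j: "1 \<le> j" "j \<le> k" by auto
    then have "d * j \<le> d * k" by simp
    moreover have "d * j \<ge> 1" using j d0 by simp
    ultimately show "d * j \<in> {1..p-1}" using dk m_def by simp
  qed auto
  have inj: "inj_on (\<lambda>j. d*j) {1..k}" using d0 by (auto simp: inj_on_def)
  have "FF p \<tau> s d {} = (\<Sum>j\<in>{1..k}. g j)"
    unfolding FF_def set_eq by (subst sum.reindex[OF inj]) (simp add: g_def)
  also have "\<dots> = (\<Sum>j<k. g (1 + j))" by (simp add: sum.atLeast1_atMost_eq)
  also have "\<dots> = (\<Sum>j<k. g j)" by (rule sum_shift_periodic[where g=g, OF k0 per])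
  finally have "FF p \<tau> s d {} = (\<Sum>j<(p-1) div d. ee p (int (s * \<tau>^(d*j))))"
    by (simp add: g_def k_def m_def)
  then show ?thesis using subgroup_bound[OF p r d s] by simp
qed

lemma FF_step:
  assumes "q \<notin> Q" "coprime d q"
  shows "FF p \<tau> s d (insert q Q) = FF p \<tau> s d Q - FF p \<tau> s (d*q) Q"
proof -
  define A where "A = {n\<in>{1..p-1}. d dvd n \<and> (\<forall>q\<in>Q. \<not> q dvd n)}"
  define B where "B = {n\<in>{1..p-1}. d*q dvd n \<and> (\<forall>q\<in>Q. \<not> q dvd n)}"
  have eq: "{n\<in>{1..p-1}. d dvd n \<and> (\<forall>q'\<in>insert q Q. \<not> q' dvd n)} = A - B"
  proof -
    have key: "d dvd n \<Longrightarrow> d*q dvd n \<longleftrightarrow> q dvd n" for n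
      using assms(2) by (meson divides_mult dvd_mult_right dvd_mult_left)
    show ?thesis unfolding A_def B_def using key by blast
  qed
  have sub: "B \<subseteq> A" unfolding A_def B_def by (auto intro: dvd_mult_left)
  have "finite A" unfolding A_def by simp
  then show ?thesis unfolding FF_def eq
    by (subst sum_diff[OF _ sub]) (simp_all add: A_def B_def)
qed

lemma FF_bound:
  assumes p: "prime p" and r: "residue_primroot p \<tau>" and s: "coprime s p"
    and Q: "finite Q" "Q \<subseteq> prime_factors (p - 1)"
  shows "d dvd p - 1 \<Longrightarrow> (\<forall>q\<in>Q. coprime d q) \<Longrightarrow> norm (FF p \<tau> s d Q) \<le> 2 ^ card Q * sqrt p"
  using Q
proof (induction Q arbitrary: d rule: finite_induct)
  case empty
  then show ?case using FF_base[OF p r _ s] by simp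
next
  case (insert q Q)
  have q: "prime q" "q dvd p - 1" using insert.prems(3) by auto
  have dq: "coprime d q" using insert.prems(2) by simp
  have dqm: "d * q dvd p - 1"
    using insert.prems(1) q(2) dq by (simp add: divides_mult)
  have cop2: "\<forall>q'\<in>Q. coprime (d*q) q'"
  proof
    fix q' assume q': "q' \<in> Q"
    then have "prime q'" "q' \<noteq> q" using insert by auto
    then have "coprime q q'" using q(1) by (simp add: primes_coprime)
    then show "coprime (d*q) q'" using insert.prems(2) q' by simp
  qed
  have IH1: "norm (FF p \<tau> s d Q) \<le> 2 ^ card Q * sqrt p"
    using insert.IH insert.prems by auto
  have IH2: "norm (FF p \<tau> s (d*q) Q) \<le> 2 ^ card Q * sqrt p"
    using insert.IH dqm cop2 insert.prems(3) by auto
  have "norm (FF p \<tau> s d (insert q Q)) \<le> norm (FF p \<tau> s d Q) + norm (FF p \<tau> s (d*q) Q)"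
    using FF_step[OF insert.hyps(2) dq] norm_triangle_ineq4 by metis
  also have "\<dots> \<le> 2 ^ card (insert q Q) * sqrt p" using IH1 IH2 insert.hyps by simp
  finally show ?case .
qed

lemma omega_nat_bound:
  fixes m :: nat assumes m: "m > 0"
  shows "16 ^ card (prime_factors m) \<le> 16^16 * m"
proof -
  define P where "P = prime_factors m"
  define A where "A = {q\<in>P. q < 16}"
  define B where "B = P - A"
  have fin: "finite A" "finite B" "finite P" unfolding A_def B_def P_def by auto
  have PAB: "P = A \<union> B" "A \<inter> B = {}" unfolding A_def B_def by auto
  have cardP: "card P = card A + card B" using PAB fin card_Un_disjoint by metis
  have "card A \<le> card {..<16::nat}" unfolding A_def by (rule card_mono) auto
  then have cA: "card A \<le> 16" by simp
  have pos: "\<And>q. q \<in> P \<Longrightarrow> q > 0" unfolding P_def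
    using prime_gt_0_nat by (auto simp: in_prime_factors_iff)
  have "(16::nat) ^ card B = (\<Prod>q\<in>B. 16)" by simp
  also have "\<dots> \<le> (\<Prod>q\<in>B. q)" by (rule prod_mono) (auto simp: B_def A_def)
  also have "\<dots> \<le> (\<Prod>q\<in>A. q) * (\<Prod>q\<in>B. q)"
  proof -
    have "1 \<le> (\<Prod>q\<in>A. q)" by (rule prod_ge_1) (use pos in \<open>auto simp: A_def Suc_le_eq\<close>)
    then show ?thesis by simp
  qed
  also have "\<dots> = (\<Prod>q\<in>P. q)" using PAB fin by (simp add: prod.union_disjoint)
  also have "\<dots> \<le> (\<Prod>q\<in>P. q ^ multiplicity q m)"
  proof (rule prod_mono)
    fix q assume q: "q \<in> P"
    then have "multiplicity q m > 0" unfolding P_def using m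
      by (simp add: prime_factors_multiplicity)
    then show "0 \<le> q \<and> q \<le> q ^ multiplicity q m"
      using pos[OF q] by (simp add: self_le_power)
  qed
  also have "\<dots> = m" unfolding P_def using prod_prime_factors[of m] m by simp
  finally have B16: "16 ^ card B \<le> m" .
  have "(16::nat) ^ card P = 16 ^ card A * 16 ^ card B" by (simp add: cardP power_add)
  also have "\<dots> \<le> 16^16 * m"
  proof -
    have "16 ^ card A \<le> (16::nat)^16" by (rule power_increasing[OF cA]) simp
    then show ?thesis using B16 by (intro mult_mono) auto
  qed
  finally show ?thesis unfolding P_def .
qed

lemma omega_bound:
  fixes m :: nat assumes m: "m > 0"
  shows "(2::real) ^ card (prime_factors m) \<le> 2^16 * real m powr (1/4)"
proof -
  define w where "w = card (prime_factors m)"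
  have "((2::real) ^ w) ^ 4 = 2 ^ (w * 4)" by (simp only: power_mult)
  also have "\<dots> = (2 ^ 4) ^ w" by (simp only: mult.commute[of w 4] power_mult)
  also have "\<dots> = real (16 ^ w)" by simp
  also have "\<dots> \<le> real (16^16 * m)" using omega_nat_bound[OF m] unfolding w_def by linarith
  also have "\<dots> = (2^16 * real m powr (1/4)) ^ 4"
  proof -
    have "(real m powr (1/4)) ^ 4 = real m" using m by (simp add: powr_power)
    then show ?thesis by (simp add: power_mult_distrib)
  qed
  finally have "((2::real) ^ w) ^ 4 \<le> (2^16 * real m powr (1/4)) ^ 4" .
  then have "(2::real) ^ w \<le> 2^16 * real m powr (1/4)"
    using power_le_imp_le_base[of "2^w" 3 "2^16 * real m powr (1/4)"] by simp
  then show ?thesis unfolding w_def .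
qed

lemma coprime_iff_pf:
  fixes n m :: nat assumes m: "m > 0"
  shows "coprime n m \<longleftrightarrow> (\<forall>q\<in>prime_factors m. \<not> q dvd n)"
proof
  assume c: "coprime n m"
  show "\<forall>q\<in>prime_factors m. \<not> q dvd n"
  proof (intro ballI notI)
    fix q assume q: "q \<in> prime_factors m" "q dvd n"
    then have "prime q" "q dvd m" by (auto simp: in_prime_factors_iff)
    then have "is_unit q" using c q(2) coprime_common_divisor[of n m q] by blast
    then show False using \<open>prime q\<close> using not_prime_unit by blast
  qed
next
  assume h: "\<forall>q\<in>prime_factors m. \<not> q dvd n"
  show "coprime n m"
  proof (rule ccontr)
    assume "\<not> coprime n m"
    then have "gcd n m \<noteq> 1" by blast
    then obtain q where q: "prime q" "q dvd gcd n m" using prime_factor_nat[of "gcd n m"] by blast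
    then have "q dvd m" "q dvd n" by auto
    then have "q \<in> prime_factors m" using m q(1) by (simp add: in_prime_factors_iff)
    then show False using h \<open>q dvd n\<close> by blast
  qed
qed

lemma main_bound:
  assumes p: "prime p" and r: "residue_primroot p \<tau>" and s: "s \<in> {1..p-1}"
  shows "norm (\<Sum>n \<in> {n \<in> {1..p-1}. coprime n (p - 1)}.
                   exp (2 * of_real pi * \<i> * of_nat s * of_nat (\<tau> ^ n) / of_nat p))
             \<le> 2^16 * real p powr (3/4)"
proof -
  have p1: "p > 1" using prime_gt_1_nat[OF p] .
  have m0: "p - 1 > 0" using p1 by simp
  have "\<not> p dvd s" using s by (auto dest: dvd_imp_le)
  then have sc: "coprime s p" using p by (simp add: prime_imp_coprime coprime_commute)
  have seq: "{n \<in> {1..p-1}. coprime n (p - 1)} =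
      {n\<in>{1..p-1}. 1 dvd n \<and> (\<forall>q\<in>prime_factors (p-1). \<not> q dvd n)}"
    using coprime_iff_pf[OF m0] by auto
  have "(\<Sum>n \<in> {n \<in> {1..p-1}. coprime n (p - 1)}.
                   exp (2 * of_real pi * \<i> * of_nat s * of_nat (\<tau> ^ n) / of_nat p))
       = FF p \<tau> s 1 (prime_factors (p-1))"
    unfolding FF_def seq ee_def by (intro sum.cong refl) (simp add: mult.assoc)
  also have "norm \<dots> \<le> 2 ^ card (prime_factors (p-1)) * sqrt p"
    by (rule FF_bound[OF p r sc]) auto
  also have "\<dots> \<le> (2^16 * real (p-1) powr (1/4)) * sqrt p"
    by (rule mult_right_mono[OF omega_bound[OF m0]]) simp
  also have "\<dots> \<le> (2^16 * real p powr (1/4)) * real p powr (1/2)"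
    by (intro mult_mono powr_mono2) (auto simp: powr_half_sqrt)
  also have "\<dots> = 2^16 * real p powr (3/4)"
    by (simp add: mult.assoc powr_add[symmetric])
  finally show ?thesis .
qed

theorem lemma3p1:
  fixes \<epsilon> :: real
  assumes "0 < \<epsilon>" and "\<epsilon> < 1/16"
  shows "\<exists>C > 0. \<exists>P0 :: nat. \<forall>p \<tau> s :: nat.
           prime p \<and> p \<ge> P0 \<and> residue_primroot p \<tau> \<and>
           s \<in> {1..p-1} \<and> coprime s (p - 1) \<longrightarrow>
           norm (\<Sum>n \<in> {n \<in> {1..p-1}. coprime n (p - 1)}.
                   exp (2 * of_real pi * \<i> * of_nat s * of_nat (\<tau> ^ n) / of_nat p))
             \<le> C * real p powr (1 - \<epsilon>)"
  apply (rule exI[of _ "2^16"])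
  apply (rule conjI)
   apply simp
  apply (rule exI[of _ 0])
proof (intro allI impI)
  fix p \<tau> s :: nat
  assume h: "prime p \<and> 0 \<le> p \<and> residue_primroot p \<tau> \<and> s \<in> {1..p-1} \<and> coprime s (p - 1)"
  then have p: "prime p" by simp
  have "real p \<ge> 1" using prime_gt_1_nat[OF p] by simp
  then have "real p powr (3/4) \<le> real p powr (1 - \<epsilon>)"
    using assms by (intro powr_mono) auto
  then have le2: "2^16 * real p powr (3/4) \<le> 2^16 * real p powr (1 - \<epsilon>)" by simp
  then show "norm (\<Sum>n \<in> {n \<in> {1..p-1}. coprime n (p - 1)}.
                   exp (2 * of_real pi * \<i> * of_nat s * of_nat (\<tau> ^ n) / of_nat p))
             \<le> 2^16 * real p powr (1 - \<epsilon>)"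
    using order_trans[OF main_bound[of p \<tau> s] le2] h by blast
qed

end
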